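(* Let $(X,d_X,\mu,T)$ and $(Y,d_Y,\nu,S)$ be compact metric measure-preserving systems with $T,S$ continuous, fix anchor sequences $(a_r)$ dense in $\operatorname{supp}\mu$ and $(b_r)$ dense in $\operatorname{supp}\nu$, and let $\lambda_0=\mu\otimes\nu$. (1) If $\lambda\in\mathcal J(T,S)$ and $\lambda\ne\lambda_0$, then there are integers $n,m,R\ge1$ and a $1$-Lipschitz continuous function $\psi$ on the finite anchored array cube such that $\int\psi\,d\widetilde\Phi_{n,m,R}(\lambda)\ne\int\psi\,d\widetilde\Phi_{n,m,R}(\lambda_0)$. (2) For every weak neighborhood $\mathcal U$ of $\lambda_0$ in $\mathcal J(T,S)$, there exist finitely many triples $(n_\ell,m_\ell,R_\ell)$, $1$-Lipschitz continuous functions $\psi_\ell$ on the corresponding anchored array cubes, and $\varepsilon>0$ such that every $\lambda\in\mathcal J(T,S)$ satisfying $\bigl|\int\psi_\ell\,d\widetilde\Phi_{n_\ell,m_\ell,R_\ell}(\lambda)-\int\psi_\ell\,d\widetilde\Phi_{n_\ell,m_\ell,R_\ell}(\lambda_0)\bigr|<\varepsilon$ for every $\ell$ belongs to $\mathcal U$.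
   Context: A compact metric measure-preserving system $(X,d_X,\mu,T)$: $(X,d_X)$ compact metric, $\mu$ Borel probability, $T$ Borel with $T_\#\mu=\mu$. $\mathcal J(T,S)$: Borel probability measures on $X\times Y$ with marginals $\mu,\nu$ invariant under $T\times S$, with the weak topology. For $z_i=(x_i,y_i)$: $\widetilde{\mathcal D}^X_{n,m,R}=\bigl((d_X(T^ax_i,T^bx_j))_{1\le i,j\le n,0\le a,b<m},(d_X(T^ax_i,a_r))_{1\le i\le n,0\le a<m,1\le r\le R}\bigr)$, $\widetilde{\mathcal D}^Y_{n,m,R}$ analogously with $d_Y,S,b_r$; these take values in a compact cube (the finite anchored array cube, with a product Euclidean metric), and $\widetilde\Phi_{n,m,R}(\lambda)=\mathrm{Law}_{\lambda^{\otimes n}}(\widetilde{\mathcal D}^X_{n,m,R},\widetilde{\mathcal D}^Y_{n,m,R})$. *)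

theory Defs
  imports "HOL-Probability.Probability"
begin

definition supp :: "'a::topological_space measure \<Rightarrow> 'a set" where
  "supp M = {x. \<forall>U. open U \<longrightarrow> x \<in> U \<longrightarrow> 0 < measure M U}"

definition dense_seq_in :: "(nat \<Rightarrow> 'a::topological_space) \<Rightarrow> 'a set \<Rightarrow> bool" where
  "dense_seq_in s A \<longleftrightarrow> range s \<subseteq> A \<and> A \<subseteq> closure (range s)"

definition cmmps :: "'a::metric_space measure \<Rightarrow> ('a \<Rightarrow> 'a) \<Rightarrow> bool" where
  "cmmps M T \<longleftrightarrow> compact (UNIV :: 'a set) \<and> sets M = sets borel \<and> prob_space M
     \<and> T \<in> measurable M M \<and> distr M M T = M"

definition joinings :: "'a::topological_space measure \<Rightarrow> 'b::topological_space measure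
    \<Rightarrow> ('a \<Rightarrow> 'a) \<Rightarrow> ('b \<Rightarrow> 'b) \<Rightarrow> ('a \<times> 'b) measure set" where
  "joinings \<mu> \<nu> T S = {lam. sets lam = sets (borel :: ('a \<times> 'b) measure) \<and> prob_space lam
     \<and> distr lam \<mu> fst = \<mu> \<and> distr lam \<nu> snd = \<nu> \<and> distr lam lam (map_prod T S) = lam}"

text \<open>Neighbourhood of lam0 inside J for the weak topology (subspace of the initial
  topology for the maps lam \<mapsto> \<integral> f d lam, f continuous (hence bounded) on the compact space).\<close>
definition weak_nhd_in :: "('a::topological_space) measure set \<Rightarrow> 'a measure \<Rightarrow> 'a measure set \<Rightarrow> bool" where
  "weak_nhd_in J lam0 U \<longleftrightarrow> U \<subseteq> J \<and> lam0 \<in> U \<and>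
     (\<exists>F \<delta>. finite F \<and> (\<forall>f\<in>F. continuous_on UNIV (f :: 'a \<Rightarrow> real)) \<and> \<delta> > 0 \<and>
        {lam \<in> J. \<forall>f\<in>F. \<bar>(\<integral>x. f x \<partial>lam) - (\<integral>x. f x \<partial>lam0)\<bar> < \<delta>} \<subseteq> U)"

text \<open>Coordinates of the anchored array (0-based indices):
  XP i j a b = d_X(T^a x_i, T^b x_j), XA i a r = d_X(T^a x_i, a_r), similarly YP, YA.\<close>
datatype coord = XP nat nat nat nat | XA nat nat nat | YP nat nat nat nat | YA nat nat nat

definition coordset :: "nat \<Rightarrow> nat \<Rightarrow> nat \<Rightarrow> coord set" where
  "coordset n m R =
     {XP i j a b | i j a b. i < n \<and> j < n \<and> a < m \<and> b < m} \<union>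
     {XA i a r | i a r. i < n \<and> a < m \<and> r < R} \<union>
     {YP i j a b | i j a b. i < n \<and> j < n \<and> a < m \<and> b < m} \<union>
     {YA i a r | i a r. i < n \<and> a < m \<and> r < R}"

definition anchored_array ::
  "('a::metric_space \<Rightarrow> 'a) \<Rightarrow> ('b::metric_space \<Rightarrow> 'b) \<Rightarrow> (nat \<Rightarrow> 'a) \<Rightarrow> (nat \<Rightarrow> 'b)
    \<Rightarrow> nat \<Rightarrow> nat \<Rightarrow> nat \<Rightarrow> (nat \<Rightarrow> 'a \<times> 'b) \<Rightarrow> (coord \<Rightarrow> real)" where
  "anchored_array T S as bs n m R z = (\<lambda>k\<in>coordset n m R. case k of
      XP i j a b \<Rightarrow> dist ((T ^^ a) (fst (z i))) ((T ^^ b) (fst (z j)))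
    | XA i a r \<Rightarrow> dist ((T ^^ a) (fst (z i))) (as r)
    | YP i j a b \<Rightarrow> dist ((S ^^ a) (snd (z i))) ((S ^^ b) (snd (z j)))
    | YA i a r \<Rightarrow> dist ((S ^^ a) (snd (z i))) (bs r))"

definition Phi ::
  "('a::metric_space \<Rightarrow> 'a) \<Rightarrow> ('b::metric_space \<Rightarrow> 'b) \<Rightarrow> (nat \<Rightarrow> 'a) \<Rightarrow> (nat \<Rightarrow> 'b)
    \<Rightarrow> nat \<Rightarrow> nat \<Rightarrow> nat \<Rightarrow> ('a \<times> 'b) measure \<Rightarrow> (coord \<Rightarrow> real) measure" where
  "Phi T S as bs n m R lam =
     distr (PiM {..<n} (\<lambda>_. lam)) (PiM (coordset n m R) (\<lambda>_. borel))
       (anchored_array T S as bs n m R)"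

definition array_cube :: "real \<Rightarrow> real \<Rightarrow> nat \<Rightarrow> nat \<Rightarrow> nat \<Rightarrow> (coord \<Rightarrow> real) set" where
  "array_cube dX dY n m R = PiE (coordset n m R) (\<lambda>k. case k of
      XP _ _ _ _ \<Rightarrow> {0..dX} | XA _ _ _ \<Rightarrow> {0..dX} | YP _ _ _ _ \<Rightarrow> {0..dY} | YA _ _ _ \<Rightarrow> {0..dY})"

definition cube_dist :: "coord set \<Rightarrow> (coord \<Rightarrow> real) \<Rightarrow> (coord \<Rightarrow> real) \<Rightarrow> real" where
  "cube_dist I u v = sqrt (\<Sum>k\<in>I. (u k - v k)\<^sup>2)"

definition lip1_cube :: "real \<Rightarrow> real \<Rightarrow> nat \<Rightarrow> nat \<Rightarrow> nat \<Rightarrow> ((coord \<Rightarrow> real) \<Rightarrow> real) \<Rightarrow> bool" where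
  "lip1_cube dX dY n m R \<psi> \<longleftrightarrow>
     (\<forall>u\<in>array_cube dX dY n m R. \<forall>v\<in>array_cube dX dY n m R.
        \<bar>\<psi> u - \<psi> v\<bar> \<le> cube_dist (coordset n m R) u v)"

end

theory Submission
  imports Defs
begin


lemma closed_meas_lim:
  fixes M :: "'c::metric_space measure" and C :: "'c set"
  assumes sM: "sets M = sets borel" and fM: "finite_measure M" and C: "closed C" "C \<noteq> {}"
  shows "(\<lambda>k. \<integral>x. max 0 (1 - real k * infdist x C) \<partial>M) \<longlonglongrightarrow> measure M C"
proof -
  interpret finite_measure M by fact
  have mC: "C \<in> sets M" using sM C by simp
  have "(\<lambda>k. \<integral>x. max 0 (1 - real k * infdist x C) \<partial>M) \<longlonglongrightarrow> (\<integral>x. indicator C x \<partial>M)"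
  proof (rule integral_dominated_convergence[where w="\<lambda>_. 1"])
    show "(indicator C :: 'c \<Rightarrow> real) \<in> borel_measurable M" using mC by simp
    show "(\<lambda>x. max 0 (1 - real k * infdist x C)) \<in> borel_measurable M" for k
      using sM by (simp add: measurable_cong_sets[OF sM refl] borel_measurable_continuous_onI continuous_intros)
    show "integrable M (\<lambda>_. 1::real)" by simp
    show "AE x in M. norm (max 0 (1 - real k * infdist x C)) \<le> 1" for k
      by (auto intro!: AE_I2 simp: infdist_nonneg)
    show "AE x in M. (\<lambda>k. max 0 (1 - real k * infdist x C)) \<longlonglongrightarrow> indicator C x"
    proof (intro AE_I2)
      fix x
      show "(\<lambda>k. max 0 (1 - real k * infdist x C)) \<longlonglongrightarrow> indicator C x"
      proof (cases "x \<in> C")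
        case True
        then have "infdist x C = 0" using C in_closed_iff_infdist_zero by blast
        then show ?thesis using True by simp
      next
        case False
        then have pos: "infdist x C > 0" using C infdist_pos_not_in_closed by blast
        obtain N :: nat where N: "N > 1 / infdist x C" using reals_Archimedean2 by blast
        have "eventually (\<lambda>k. max 0 (1 - real k * infdist x C) = 0) sequentially"
        proof (rule eventually_sequentiallyI[of N])
          fix k assume "N \<le> k"
          then have "real k > 1 / infdist x C" using N by linarith
          then have "real k * infdist x C > 1" using pos by (simp add: field_simps)
          then show "max 0 (1 - real k * infdist x C) = 0" by simp
        qed
        then show ?thesis using False by (simp add: tendsto_eventually)
      qed
    qed
  qed
  then show ?thesis using mC by simp
qed

lemma meas_eq_cont:
  fixes M N :: "'c::metric_space measure"
  assumes sM: "sets M = sets borel" and sN: "sets N = sets borel"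
    and fM: "finite_measure M" and fN: "finite_measure N"
    and eq: "\<And>f::'c \<Rightarrow> real. continuous_on UNIV f \<Longrightarrow> bounded (range f) \<Longrightarrow>
               (\<integral>x. f x \<partial>M) = (\<integral>x. f x \<partial>N)"
  shows "M = N"
proof (rule measure_eqI_generator_eq[where E="Collect closed" and \<Omega>=UNIV and A="\<lambda>_. UNIV"])
  show "Int_stable (Collect closed)" by (auto simp: Int_stable_def)
  show "Collect closed \<subseteq> Pow UNIV" by simp
  have bs: "sets (borel::'c measure) = sigma_sets UNIV (Collect closed)"
    by (simp add: borel_eq_closed)
  show "sets M = sigma_sets UNIV (Collect closed)" using sM bs by simp
  show "sets N = sigma_sets UNIV (Collect closed)" using sN bs by simp
  show "range (\<lambda>_. UNIV) \<subseteq> Collect closed" by simp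
  show "(\<Union>i. UNIV) = UNIV" by simp
  show "emeasure M UNIV \<noteq> \<infinity>" for i::nat
    using fM sets_eq_imp_space_eq[OF sM] finite_measure.emeasure_finite by fastforce
  fix X :: "'c set" assume X: "X \<in> Collect closed"
  show "emeasure M X = emeasure N X"
  proof (cases "X = {}")
    case True then show ?thesis by simp
  next
    case False
    have bnd: "bounded (range (\<lambda>x. max 0 (1 - real k * infdist x X)))" for k
    proof (rule boundedI[of _ 1])
      fix y assume "y \<in> range (\<lambda>x. max 0 (1 - real k * infdist x X))"
      then obtain x where y: "y = max 0 (1 - real k * infdist x X)" by blast
      have "0 \<le> real k * infdist x X" by (simp add: infdist_nonneg)
      then show "norm y \<le> 1" unfolding y by simp
    qed
    have e: "(\<integral>x. max 0 (1 - real k * infdist x X) \<partial>M) = (\<integral>x. max 0 (1 - real k * infdist x X) \<partial>N)" for k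
      by (rule eq[OF _ bnd]) (intro continuous_intros)
    have "measure M X = measure N X"
    proof -
      have cX: "closed X" using X by simp
      note l1 = closed_meas_lim[OF sM fM cX False]
      note l2 = closed_meas_lim[OF sN fN cX False]
      show ?thesis using LIMSEQ_unique[OF l1 l2[folded e]] .
    qed
    moreover have "X \<in> sets M" "X \<in> sets N" using X sM sN by simp_all
    ultimately show ?thesis 
      using finite_measure.emeasure_eq_measure[OF fM] finite_measure.emeasure_eq_measure[OF fN] by simp
  qed
qed


lemma supp_closed: "closed (supp M)"
proof -
  have "open (- supp M)"
  proof (subst open_subopen, intro ballI)
    fix x assume "x \<in> - supp M"
    then obtain U where U: "open U" "x \<in> U" "\<not> 0 < measure M U" unfolding supp_def by auto
    have "U \<subseteq> - supp M" using U unfolding supp_def by auto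
    then show "\<exists>T. open T \<and> x \<in> T \<and> T \<subseteq> - supp M" using U by blast
  qed
  then show ?thesis by (simp add: closed_def)
qed

lemma AE_supp:
  fixes M :: "'c::{metric_space,second_countable_topology} measure"
  assumes sM: "sets M = sets borel" and P: "prob_space M"
  shows "AE x in M. x \<in> supp M"
proof -
  interpret prob_space M by fact
  define F where "F = {U. open U \<and> measure M U = 0}"
  obtain F' where F': "F' \<subseteq> F" "countable F'" "\<Union>F' = \<Union>F"
    using Lindelof[of F] unfolding F_def by blast
  have "\<forall>U\<in>F'. AE x in M. x \<notin> U"
  proof
    fix U assume "U \<in> F'"
    then have U: "open U" "measure M U = 0" using F' F_def by auto
    then have "U \<in> sets M" using sM by simp
    then have "U \<in> null_sets M" using U emeasure_eq_measure by (intro null_setsI) auto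
    then show "AE x in M. x \<notin> U" by (rule AE_not_in)
  qed
  then have ae: "AE x in M. \<forall>U\<in>F'. x \<notin> U"
    using AE_ball_countable[OF F'(2), of "\<lambda>x U. x \<notin> U" M] by blast
  have imp: "x \<in> supp M" if x: "\<forall>U\<in>F'. x \<notin> U" for x
    unfolding supp_def
  proof (intro CollectI allI impI)
    fix U assume U: "open U" "x \<in> U"
    show "0 < measure M U"
    proof (rule ccontr)
      assume "\<not> 0 < measure M U"
      then have "measure M U = 0" using measure_nonneg[of M U] by linarith
      then have "U \<in> F" using U unfolding F_def by blast
      then have "x \<in> \<Union>F'" using F'(3) U by blast
      then show False using x by blast
    qed
  qed
  show ?thesis using ae by (rule eventually_mono) (rule imp)
qed

lemma finite_net:
  fixes as :: "nat \<Rightarrow> 'c::metric_space"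
  assumes A: "compact A" and d: "\<forall>x\<in>A. \<forall>e>0. \<exists>r. dist x (as r) < e" and e: "e > 0"
  shows "\<exists>R. \<forall>x\<in>A. \<exists>r<R. dist x (as r) < e"
proof -
  have "A \<subseteq> (\<Union>r\<in>UNIV. ball (as r) e)"
    using d e by (force simp: dist_commute)
  then obtain D where D: "finite D" "A \<subseteq> (\<Union>r\<in>D. ball (as r) e)"
    using compactE_image[OF A, of UNIV "\<lambda>r. ball (as r) e"] by auto
  define R where "R = Suc (Max (insert 0 D))"
  have "\<forall>r\<in>D. r < R" unfolding R_def using D(1) by (simp add: le_imp_less_Suc)
  have "\<forall>x\<in>A. \<exists>r<R. dist x (as r) < e"
  proof
    fix x assume "x \<in> A"
    then obtain r where r: "r \<in> D" "x \<in> ball (as r) e" using D(2) by blast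
    then have "dist x (as r) < e" by (simp add: dist_commute)
    then show "\<exists>r<R. dist x (as r) < e" using r(1) \<open>\<forall>r\<in>D. r < R\<close> by blast
  qed
  then show ?thesis by blast
qed

definition G :: "('a::metric_space \<times> 'b::metric_space \<Rightarrow> real) \<Rightarrow> (nat \<Rightarrow> 'a) \<Rightarrow> (nat \<Rightarrow> 'b)
   \<Rightarrow> nat \<Rightarrow> real \<Rightarrow> 'a \<times> 'b \<Rightarrow> real" where
  "G f as bs R K p = Min ((\<lambda>(r,s). f (as r, bs s) + K * (dist (fst p) (as r) + dist (snd p) (bs s)))
      ` ({..<R} \<times> {..<R}))"

lemma dist_pair_le: "dist (a, b) (c, d) \<le> dist a c + dist b d"
proof -
  have "(dist a c)\<^sup>2 + (dist b d)\<^sup>2 \<le> (dist a c + dist b d)\<^sup>2"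
    by (simp add: power2_eq_square algebra_simps)
  then have "sqrt ((dist a c)\<^sup>2 + (dist b d)\<^sup>2) \<le> sqrt ((dist a c + dist b d)\<^sup>2)"
    by (rule real_sqrt_le_mono)
  then show ?thesis by (simp add: dist_Pair_Pair)
qed

lemma approx:
  fixes f :: "'a::metric_space \<times> 'b::metric_space \<Rightarrow> real"
  assumes cA: "compact (UNIV::'a set)" and cB: "compact (UNIV::'b set)" and fc: "continuous_on UNIV f"
   and A: "compact A" "\<forall>x\<in>A. \<forall>e>0. \<exists>r. dist x (as r) < e"
   and B: "compact B" "\<forall>x\<in>B. \<forall>e>0. \<exists>r. dist x (bs r) < e"
   and eta: "\<eta> > 0"
  shows "\<exists>R K. R \<ge> 1 \<and> K > 0 \<and> (\<forall>x\<in>A. \<forall>y\<in>B. \<bar>G f as bs R K (x,y) - f (x,y)\<bar> \<le> \<eta>)"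
proof -
  have cAB: "compact (UNIV :: ('a \<times> 'b) set)" using compact_Times[OF cA cB] by simp
  have "uniformly_continuous_on UNIV f" using compact_uniformly_continuous[OF fc cAB] .
  from this[unfolded uniformly_continuous_on_def, rule_format, of "\<eta>/2"]
  obtain d where d0: "d > 0" "\<forall>x\<in>UNIV. \<forall>x'\<in>UNIV. dist x' x < d \<longrightarrow> dist (f x') (f x) < \<eta>/2"
    using eta by auto
  have d: "d > 0" "\<And>p q. dist p q < d \<Longrightarrow> dist (f p) (f q) < \<eta>/2" using d0 by auto
  have "bounded (range f)" using compact_imp_bounded[OF compact_continuous_image[OF fc cAB]] .
  then obtain Bf0 where "\<forall>p. norm (f p) \<le> Bf0" unfolding bounded_iff by auto
  then obtain Bf where Bf: "\<And>p. \<bar>f p\<bar> \<le> Bf" "Bf \<ge> 0"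
    by (intro that[of "max 0 Bf0"]) (auto intro: le_max_iff_disj[THEN iffD2])
  define K where "K = 2 * Bf / d + 1"
  have K: "K > 0" "K * d \<ge> 2 * Bf" using d Bf(2) unfolding K_def by (auto simp: field_simps)
  define e where "e = min (d/2) (\<eta>/(4*K))"
  have e: "e > 0" "2 * e \<le> d" "4 * K * e \<le> \<eta>" using d K eta unfolding e_def
    by (auto simp: field_simps min_def)
  obtain R1 where R1: "\<forall>x\<in>A. \<exists>r<R1. dist x (as r) < e" using finite_net[OF A e(1)] by blast
  obtain R2 where R2: "\<forall>x\<in>B. \<exists>r<R2. dist x (bs r) < e" using finite_net[OF B e(1)] by blast
  define R where "R = max 1 (max R1 R2)"
  have R: "R \<ge> 1" unfolding R_def by simp
  have "\<bar>G f as bs R K (x,y) - f (x,y)\<bar> \<le> \<eta>" if x: "x \<in> A" and y: "y \<in> B" for x y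
  proof -
    define t where "t = (\<lambda>(r,s). f (as r, bs s) + K * (dist x (as r) + dist y (bs s)))"
    have Gt: "G f as bs R K (x,y) = Min (t ` ({..<R} \<times> {..<R}))" unfolding G_def t_def by simp
    have fin: "finite (t ` ({..<R} \<times> {..<R}))" by simp
    have "0 < R" using R by simp
    then have ne: "t ` ({..<R} \<times> {..<R}) \<noteq> {}" by blast
    obtain r where r0: "r < R1" "dist x (as r) < e" using R1 x by blast
    then have r: "r < R" "dist x (as r) < e" unfolding R_def by auto
    obtain s where s0: "s < R2" "dist y (bs s) < e" using R2 y by blast
    then have s: "s < R" "dist y (bs s) < e" unfolding R_def by auto
    have "dist (as r, bs s) (x, y) \<le> dist (as r) x + dist (bs s) y" by (rule dist_pair_le)
    also have "\<dots> < d" using r s e by (simp add: dist_commute)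
    finally have "dist (f (as r, bs s)) (f (x,y)) < \<eta>/2" using d by blast
    then have f1: "f (as r, bs s) < f (x,y) + \<eta>/2" unfolding dist_real_def by arith
    have "K * (dist x (as r) + dist y (bs s)) \<le> K * (2*e)"
      using r s K by (intro mult_left_mono) auto
    moreover have "K * (2*e) \<le> \<eta>/2" using e(3) by (simp add: algebra_simps)
    moreover have "t (r,s) = f (as r, bs s) + K * (dist x (as r) + dist y (bs s))" unfolding t_def by simp
    ultimately have "t (r,s) \<le> f (x,y) + \<eta>" using f1 by linarith
    moreover have "Min (t ` ({..<R} \<times> {..<R})) \<le> t (r,s)" using r s fin by (intro Min_le) auto
    ultimately have up: "G f as bs R K (x,y) \<le> f (x,y) + \<eta>" using Gt by simp
    have "\<forall>q\<in>t ` ({..<R} \<times> {..<R}). f (x,y) - \<eta> \<le> q"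
    proof
      fix q assume "q \<in> t ` ({..<R} \<times> {..<R})"
      then obtain r' s' where q: "q = f (as r', bs s') + K * (dist x (as r') + dist y (bs s'))"
        unfolding t_def by auto
      have nn: "0 \<le> K * (dist x (as r') + dist y (bs s'))" using K by simp
      show "f (x,y) - \<eta> \<le> q"
      proof (cases "dist x (as r') + dist y (bs s') < d")
        case True
        have "dist (as r', bs s') (x, y) \<le> dist (as r') x + dist (bs s') y" by (rule dist_pair_le)
        also have "\<dots> < d" using True by (simp add: dist_commute)
        finally have "dist (f (as r', bs s')) (f (x,y)) < \<eta>/2" using d by blast
        then have "f (as r', bs s') > f (x,y) - \<eta>/2" unfolding dist_real_def by arith
        then show ?thesis using q nn eta by linarith
      next
        case False
        then have "K * (dist x (as r') + dist y (bs s')) \<ge> K * d" using K by (intro mult_left_mono) auto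
        then have "K * (dist x (as r') + dist y (bs s')) \<ge> 2 * Bf" using K by linarith
        moreover have "f (as r', bs s') \<ge> - Bf" "f (x,y) \<le> Bf" using Bf(1)[of "(as r', bs s')"] Bf(1)[of "(x,y)"] by auto
        ultimately show ?thesis using q eta by linarith
      qed
    qed
    then have lo: "f (x,y) - \<eta> \<le> G f as bs R K (x,y)" using Gt fin ne by (simp add: Min_ge_iff)
    show ?thesis using up lo by linarith
  qed
  then show ?thesis using R K(1) by blast
qed


definition psi :: "('a::metric_space \<times> 'b::metric_space \<Rightarrow> real) \<Rightarrow> (nat \<Rightarrow> 'a) \<Rightarrow> (nat \<Rightarrow> 'b)
   \<Rightarrow> nat \<Rightarrow> real \<Rightarrow> (coord \<Rightarrow> real) \<Rightarrow> real" where
  "psi f as bs R K u = (1/(2*K)) * Min ((\<lambda>(r,s). f (as r, bs s) + K * (u (XA 0 0 r) + u (YA 0 0 s)))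
      ` ({..<R} \<times> {..<R}))"

lemma coordset1: "coordset 1 1 R = {XP 0 0 0 0, YP 0 0 0 0} \<union> (\<lambda>r. XA 0 0 r) ` {..<R} \<union> (\<lambda>r. YA 0 0 r) ` {..<R}"
  by (auto simp: coordset_def)

lemma finite_coordset1: "finite (coordset 1 1 R)"
  unfolding coordset1 by simp

lemma ne_sq: "R \<ge> (1::nat) \<Longrightarrow> {..<R} \<times> {..<R} \<noteq> {}"
proof -
  assume "R \<ge> 1"
  then have "(0,0) \<in> {..<R} \<times> {..<R}" by simp
  then show ?thesis by blast
qed

lemma Min_diff:
  fixes a b :: "'i \<Rightarrow> real"
  assumes I: "finite I" "I \<noteq> {}" and ab: "\<And>i. i \<in> I \<Longrightarrow> \<bar>a i - b i\<bar> \<le> c"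
  shows "\<bar>Min (a ` I) - Min (b ` I)\<bar> \<le> c"
proof -
  have "Min (a ` I) - c \<le> Min (b ` I)"
  proof -
    have "\<forall>y\<in>b ` I. Min (a ` I) - c \<le> y"
    proof
      fix y assume "y \<in> b ` I"
      then obtain i where i: "i \<in> I" "y = b i" by blast
      have "Min (a ` I) \<le> a i" using I i by (intro Min_le) auto
      then show "Min (a ` I) - c \<le> y" using ab[OF i(1)] i by linarith
    qed
    then show ?thesis using I by (simp add: Min_ge_iff)
  qed
  moreover have "Min (b ` I) - c \<le> Min (a ` I)"
  proof -
    have "\<forall>y\<in>a ` I. Min (b ` I) - c \<le> y"
    proof
      fix y assume "y \<in> a ` I"
      then obtain i where i: "i \<in> I" "y = a i" by blast
      have "Min (b ` I) \<le> b i" using I i by (intro Min_le) auto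
      then show "Min (b ` I) - c \<le> y" using ab[OF i(1)] i by linarith
    qed
    then show ?thesis using I by (simp add: Min_ge_iff)
  qed
  ultimately show ?thesis by linarith
qed

lemma Min_cont:
  fixes g :: "'i \<Rightarrow> 'c::topological_space \<Rightarrow> real"
  assumes "finite I" "I \<noteq> {}" "\<And>i. i \<in> I \<Longrightarrow> continuous_on S (g i)"
  shows "continuous_on S (\<lambda>x. Min ((\<lambda>i. g i x) ` I))"
  using assms
proof (induction I rule: finite_ne_induct)
  case (singleton i)
  then show ?case by simp
next
  case (insert i I)
  have e: "(\<lambda>x. Min ((\<lambda>i. g i x) ` insert i I)) = (\<lambda>x. min (g i x) (Min ((\<lambda>i. g i x) ` I)))"
    using insert.hyps by (simp add: Min_insert)
  show ?case unfolding e using insert by (intro continuous_on_min) auto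
qed

lemma coord_le_cube_dist:
  assumes "finite I" "k \<in> I"
  shows "\<bar>u k - v k\<bar> \<le> cube_dist I u v"
proof -
  have "(u k - v k)\<^sup>2 \<le> (\<Sum>j\<in>I. (u j - v j)\<^sup>2)"
    using assms by (intro member_le_sum) auto
  then have "sqrt ((u k - v k)\<^sup>2) \<le> sqrt (\<Sum>j\<in>I. (u j - v j)\<^sup>2)" by (rule real_sqrt_le_mono)
  then show ?thesis by (simp add: cube_dist_def)
qed

lemma psi_lip:
  assumes K: "K > 0" and R: "R \<ge> 1"
  shows "\<bar>psi f as bs R K u - psi f as bs R K v\<bar> \<le> cube_dist (coordset 1 1 R) u v"
proof -
  let ?I = "{..<R} \<times> {..<R}"
  let ?c = "cube_dist (coordset 1 1 R) u v"
  define a where "a = (\<lambda>(r,s). f (as r, bs s) + K * (u (XA 0 0 r) + u (YA 0 0 s)))"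
  define b where "b = (\<lambda>(r,s). f (as r, bs s) + K * (v (XA 0 0 r) + v (YA 0 0 s)))"
  have ne: "?I \<noteq> {}" using ne_sq[OF R] .
  have "\<bar>a i - b i\<bar> \<le> 2 * K * ?c" if i: "i \<in> ?I" for i
  proof -
    obtain r s where rs: "i = (r,s)" "r < R" "s < R" using i by auto
    have inr: "XA 0 0 r \<in> coordset 1 1 R" "YA 0 0 s \<in> coordset 1 1 R" using rs unfolding coordset1 by auto
    have c1: "\<bar>u (XA 0 0 r) - v (XA 0 0 r)\<bar> \<le> ?c" by (rule coord_le_cube_dist[OF finite_coordset1 inr(1)])
    have c2: "\<bar>u (YA 0 0 s) - v (YA 0 0 s)\<bar> \<le> ?c" by (rule coord_le_cube_dist[OF finite_coordset1 inr(2)])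
    have "a i - b i = K * ((u (XA 0 0 r) - v (XA 0 0 r)) + (u (YA 0 0 s) - v (YA 0 0 s)))"
      unfolding a_def b_def rs by (simp add: algebra_simps)
    then have "\<bar>a i - b i\<bar> = K * \<bar>(u (XA 0 0 r) - v (XA 0 0 r)) + (u (YA 0 0 s) - v (YA 0 0 s))\<bar>"
      using K by (simp add: abs_mult)
    also have "\<dots> \<le> K * (2 * ?c)" using c1 c2 K by (intro mult_left_mono) auto
    finally show ?thesis by simp
  qed
  then have "\<bar>Min (a ` ?I) - Min (b ` ?I)\<bar> \<le> 2 * K * ?c" using ne by (intro Min_diff) auto
  moreover have "psi f as bs R K u - psi f as bs R K v = (1/(2*K)) * (Min (a ` ?I) - Min (b ` ?I))"
    unfolding psi_def a_def b_def by (simp add: algebra_simps)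
  ultimately have "\<bar>psi f as bs R K u - psi f as bs R K v\<bar> = \<bar>Min (a ` ?I) - Min (b ` ?I)\<bar> / (2*K)"
    using K by (simp add: abs_mult)
  also have "\<dots> \<le> (2 * K * ?c) / (2*K)"
    using K \<open>\<bar>Min (a ` ?I) - Min (b ` ?I)\<bar> \<le> 2 * K * ?c\<close> by (intro divide_right_mono) auto
  also have "\<dots> = ?c" using K by simp
  finally show ?thesis .
qed

lemma G_cont:
  assumes R: "R \<ge> 1"
  shows "continuous_on UNIV (G f as bs R K)"
proof -
  have "continuous_on UNIV (\<lambda>p. Min ((\<lambda>i. (case i of (r,s) \<Rightarrow> f (as r, bs s) + K * (dist (fst p) (as r) + dist (snd p) (bs s)))) ` ({..<R} \<times> {..<R})))"
    using ne_sq[OF R] by (intro Min_cont) (auto simp: split_beta intro!: continuous_intros)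
  then show ?thesis unfolding G_def[abs_def] by (simp add: split_beta)
qed



lemma fst_meas:
  assumes sl: "sets lam = sets (borel :: ('a::{metric_space,second_countable_topology} \<times> 'b::{metric_space,second_countable_topology}) measure)"
  shows "fst \<in> borel_measurable lam" "snd \<in> borel_measurable lam"
proof -
  have "fst \<in> borel_measurable (borel :: ('a \<times> 'b) measure)"
    by (rule borel_measurable_continuous_onI) (intro continuous_intros)
  then show "fst \<in> borel_measurable lam" by (subst measurable_cong_sets[OF sl refl])
  have "snd \<in> borel_measurable (borel :: ('a \<times> 'b) measure)"
    by (rule borel_measurable_continuous_onI) (intro continuous_intros)
  then show "snd \<in> borel_measurable lam" by (subst measurable_cong_sets[OF sl refl])
qed

lemma G_meas:
  assumes sl: "sets lam = sets (borel :: ('a::{metric_space,second_countable_topology} \<times> 'b::{metric_space,second_countable_topology}) measure)"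
    and R: "R \<ge> 1"
  shows "G f as bs R K \<in> borel_measurable lam"
proof -
  have "G f as bs R K \<in> borel_measurable (borel :: ('a \<times> 'b) measure)"
    by (rule borel_measurable_continuous_onI[OF G_cont[OF R]])
  then show ?thesis by (subst measurable_cong_sets[OF sl refl])
qed

lemma Phi_formula:
  fixes lam :: "('a::{metric_space,second_countable_topology} \<times> 'b::{metric_space,second_countable_topology}) measure"
  assumes sl: "sets lam = sets borel" and pl: "prob_space lam" and R: "R \<ge> 1"
  shows "(\<integral>u. psi f as bs R K u \<partial>Phi T S as bs 1 1 R lam) = (1/(2*K)) * (\<integral>z. G f as bs R K z \<partial>lam)"
proof -
  let ?P = "PiM {..<1::nat} (\<lambda>_. lam)"
  let ?C = "PiM (coordset 1 1 R) (\<lambda>_. borel :: real measure)"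
  have comp: "(\<lambda>z. z 0) \<in> measurable ?P lam" by (rule measurable_component_singleton) simp
  have fstm: "(\<lambda>z. fst (z 0)) \<in> borel_measurable ?P"
    using measurable_compose[OF comp fst_meas(1)[OF sl]] by simp
  have sndm: "(\<lambda>z. snd (z 0)) \<in> borel_measurable ?P"
    using measurable_compose[OF comp fst_meas(2)[OF sl]] by simp
  have m1: "(\<lambda>z. dist (fst (z 0)) (as r)) \<in> borel_measurable ?P" for r
    using borel_measurable_dist[OF fstm borel_measurable_const] .
  have m2: "(\<lambda>z. dist (snd (z 0)) (bs r)) \<in> borel_measurable ?P" for r
    using borel_measurable_dist[OF sndm borel_measurable_const] .
  have AA: "anchored_array T S as bs 1 1 R \<in> measurable ?P ?C"
    unfolding anchored_array_def
  proof (rule measurable_restrict)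
    fix k assume "k \<in> coordset 1 1 R"
    then consider "k = XP 0 0 0 0" | "k = YP 0 0 0 0" | r where "k = XA 0 0 r" | r where "k = YA 0 0 r"
      unfolding coordset1 by auto
    then show "(\<lambda>z. case k of
      XP i j a b \<Rightarrow> dist ((T ^^ a) (fst (z i))) ((T ^^ b) (fst (z j)))
    | XA i a r \<Rightarrow> dist ((T ^^ a) (fst (z i))) (as r)
    | YP i j a b \<Rightarrow> dist ((S ^^ a) (snd (z i))) ((S ^^ b) (snd (z j)))
    | YA i a r \<Rightarrow> dist ((S ^^ a) (snd (z i))) (bs r)) \<in> borel_measurable ?P"
      using m1[simplified] m2[simplified] by cases simp_all
  qed
  have hm: "(\<lambda>u. case i of (r,s) \<Rightarrow> f (as r, bs s) + K * (u (XA 0 0 r) + u (YA 0 0 s))) \<in> borel_measurable ?C"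
    if i: "i \<in> {..<R} \<times> {..<R}" for i
  proof -
    obtain r s where rs: "i = (r,s)" "r < R" "s < R" using i by auto
    have inr: "XA 0 0 r \<in> coordset 1 1 R" "YA 0 0 s \<in> coordset 1 1 R" using rs unfolding coordset1 by auto
    have "(\<lambda>u. u (XA 0 0 r)) \<in> borel_measurable ?C" by (rule measurable_component_singleton[OF inr(1)])
    moreover have "(\<lambda>u. u (YA 0 0 s)) \<in> borel_measurable ?C" by (rule measurable_component_singleton[OF inr(2)])
    ultimately show ?thesis unfolding rs by simp
  qed
  have "(\<lambda>u. Min ((\<lambda>i. case i of (r,s) \<Rightarrow> f (as r, bs s) + K * (u (XA 0 0 r) + u (YA 0 0 s))) ` ({..<R} \<times> {..<R}))) \<in> borel_measurable ?C"
    apply (rule borel_measurable_Min)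
     apply simp
    apply (erule hm)
    done
  then have psim: "psi f as bs R K \<in> borel_measurable ?C"
    unfolding psi_def[abs_def] by simp
  have pw: "psi f as bs R K (anchored_array T S as bs 1 1 R z) = (1/(2*K)) * G f as bs R K (z 0)" for z
  proof -
    have "(\<lambda>(r,s). f (as r, bs s) + K * (anchored_array T S as bs 1 1 R z (XA 0 0 r) + anchored_array T S as bs 1 1 R z (YA 0 0 s))) ` ({..<R} \<times> {..<R})
        = (\<lambda>(r,s). f (as r, bs s) + K * (dist (fst (z 0)) (as r) + dist (snd (z 0)) (bs s))) ` ({..<R} \<times> {..<R})"
    proof (rule image_cong[OF refl])
      fix i assume i: "i \<in> {..<R} \<times> {..<R}"
      obtain r s where rs: "i = (r,s)" "r < R" "s < R" using i by auto
      have inr: "XA 0 0 r \<in> coordset 1 1 R" "YA 0 0 s \<in> coordset 1 1 R" using rs unfolding coordset1 by auto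
      show "(case i of (r,s) \<Rightarrow> f (as r, bs s) + K * (anchored_array T S as bs 1 1 R z (XA 0 0 r) + anchored_array T S as bs 1 1 R z (YA 0 0 s)))
         = (case i of (r,s) \<Rightarrow> f (as r, bs s) + K * (dist (fst (z 0)) (as r) + dist (snd (z 0)) (bs s)))"
        unfolding rs using inr by (simp add: anchored_array_def)
    qed
    then show ?thesis unfolding psi_def G_def by simp
  qed
  have Gm: "G f as bs R K \<in> borel_measurable lam" by (rule G_meas[OF sl R])
  have "(\<integral>u. psi f as bs R K u \<partial>Phi T S as bs 1 1 R lam)
      = (\<integral>z. psi f as bs R K (anchored_array T S as bs 1 1 R z) \<partial>?P)"
    unfolding Phi_def by (rule integral_distr[OF AA psim])
  also have "\<dots> = (\<integral>z. (1/(2*K)) * G f as bs R K (z 0) \<partial>?P)" by (simp only: pw)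
  also have "\<dots> = (1/(2*K)) * (\<integral>z. G f as bs R K (z 0) \<partial>?P)" by simp
  also have "(\<integral>z. G f as bs R K (z 0) \<partial>?P) = (\<integral>z. G f as bs R K z \<partial>distr ?P lam (\<lambda>z. z 0))"
    by (rule integral_distr[OF comp Gm, symmetric])
  also have "distr ?P lam (\<lambda>z. z 0) = lam"
    using distr_PiM_component[of "{..<1::nat}" "\<lambda>_. lam" 0] pl by simp
  finally show ?thesis .
qed



definition good :: "'a::metric_space measure \<Rightarrow> 'b::metric_space measure \<Rightarrow> ('a \<times> 'b) measure \<Rightarrow> bool" where
  "good \<mu> \<nu> lam \<longleftrightarrow> sets lam = sets (borel :: ('a \<times> 'b) measure) \<and> prob_space lam
     \<and> distr lam \<mu> fst = \<mu> \<and> distr lam \<nu> snd = \<nu>"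

lemma good_J: "lam \<in> joinings \<mu> \<nu> T S \<Longrightarrow> good \<mu> \<nu> lam"
  by (simp add: joinings_def good_def)

lemma good_prod:
  fixes \<mu> :: "'a::{metric_space, second_countable_topology} measure"
    and \<nu> :: "'b::{metric_space, second_countable_topology} measure"
  assumes sm: "sets \<mu> = sets borel" and sn: "sets \<nu> = sets borel"
    and pm: "prob_space \<mu>" and pn: "prob_space \<nu>"
  shows "good \<mu> \<nu> (\<mu> \<Otimes>\<^sub>M \<nu>)"
proof -
  interpret m: prob_space \<mu> by fact
  interpret n: prob_space \<nu> by fact
  interpret pair_prob_space \<mu> \<nu> by unfold_locales
  interpret p2: pair_prob_space \<nu> \<mu> by unfold_locales
  have s: "sets (\<mu> \<Otimes>\<^sub>M \<nu>) = sets (borel :: ('a \<times> 'b) measure)"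
    using sets_pair_measure_cong[OF sm sn] borel_prod by metis
  have p: "prob_space (\<mu> \<Otimes>\<^sub>M \<nu>)" using prob_space_pair[OF pm pn] .
  have d1: "distr (\<mu> \<Otimes>\<^sub>M \<nu>) \<mu> fst = \<mu>" using n.distr_pair_fst .
  have sw: "(\<lambda>(x, y). (y, x)) \<in> measurable (\<nu> \<Otimes>\<^sub>M \<mu>) (\<mu> \<Otimes>\<^sub>M \<nu>)" by measurable
  have "distr (\<mu> \<Otimes>\<^sub>M \<nu>) \<nu> snd = distr (distr (\<nu> \<Otimes>\<^sub>M \<mu>) (\<mu> \<Otimes>\<^sub>M \<nu>) (\<lambda>(x, y). (y, x))) \<nu> snd"
    using distr_pair_swap by simp
  also have "\<dots> = distr (\<nu> \<Otimes>\<^sub>M \<mu>) \<nu> (snd \<circ> (\<lambda>(x, y). (y, x)))"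
    by (rule distr_distr[OF measurable_snd sw])
  also have "snd \<circ> (\<lambda>(x, y). (y, x)) = (fst :: 'b \<times> 'a \<Rightarrow> 'b)" by auto
  also have "distr (\<nu> \<Otimes>\<^sub>M \<mu>) \<nu> fst = \<nu>" using m.distr_pair_fst .
  finally show ?thesis using s p d1 unfolding good_def by simp
qed

lemma AE_marg:
  fixes \<mu> :: "'a::{metric_space, second_countable_topology} measure"
    and \<nu> :: "'b::{metric_space, second_countable_topology} measure"
  assumes sm: "sets \<mu> = sets borel" and sn: "sets \<nu> = sets borel"
    and pm: "prob_space \<mu>" and pn: "prob_space \<nu>" and g: "good \<mu> \<nu> lam"
  shows "AE z in lam. fst z \<in> supp \<mu> \<and> snd z \<in> supp \<nu>"
proof -
  have sl: "sets lam = sets (borel :: ('a \<times> 'b) measure)" using g good_def by blast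
  have fm: "fst \<in> measurable lam \<mu>"
    by (subst measurable_cong_sets[OF refl sm]) (rule fst_meas(1)[OF sl])
  have snm: "snd \<in> measurable lam \<nu>"
    by (subst measurable_cong_sets[OF refl sn]) (rule fst_meas(2)[OF sl])
  have sp1: "{x \<in> space \<mu>. x \<in> supp \<mu>} \<in> sets \<mu>"
    using sm supp_closed[of \<mu>] sets_eq_imp_space_eq[OF sm] by simp
  have sp2: "{x \<in> space \<nu>. x \<in> supp \<nu>} \<in> sets \<nu>"
    using sn supp_closed[of \<nu>] sets_eq_imp_space_eq[OF sn] by simp
  have dm: "distr lam \<mu> fst = \<mu>" using g unfolding good_def by blast
  have dn: "distr lam \<nu> snd = \<nu>" using g unfolding good_def by blast
  have "AE x in distr lam \<mu> fst. x \<in> supp \<mu>" by (subst dm) (rule AE_supp[OF sm pm])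
  then have a1: "AE z in lam. fst z \<in> supp \<mu>" using AE_distr_iff[OF fm sp1] by simp
  have "AE x in distr lam \<nu> snd. x \<in> supp \<nu>" by (subst dn) (rule AE_supp[OF sn pn])
  then have a2: "AE z in lam. snd z \<in> supp \<nu>" using AE_distr_iff[OF snm sp2] by simp
  show ?thesis using a1 a2 by (rule eventually_conj)
qed

lemma cont_integrable:
  fixes g :: "'c::{metric_space,second_countable_topology} \<Rightarrow> real"
  assumes cU: "compact (UNIV :: 'c set)" and gc: "continuous_on UNIV g"
    and sl: "sets lam = sets (borel :: 'c measure)" and pl: "prob_space lam"
  shows "integrable lam g"
proof -
  interpret prob_space lam by fact
  have "bounded (range g)" using compact_imp_bounded[OF compact_continuous_image[OF gc cU]] .
  then obtain B where B: "\<forall>x. norm (g x) \<le> B" unfolding bounded_iff by auto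
  have gm: "g \<in> borel_measurable lam"
    using borel_measurable_continuous_onI[OF gc] by (subst measurable_cong_sets[OF sl refl])
  show ?thesis using B gm by (intro integrable_const_bound[where B=B]) auto
qed

lemma key:
  fixes lam :: "('a::{metric_space,second_countable_topology} \<times> 'b::{metric_space,second_countable_topology}) measure"
  assumes cA: "compact (UNIV :: 'a set)" and cB: "compact (UNIV :: 'b set)"
    and sl: "sets lam = sets borel" and pl: "prob_space lam"
    and ae: "AE z in lam. fst z \<in> A \<and> snd z \<in> B"
    and fc: "continuous_on UNIV f" and R: "R \<ge> 1" and K: "K > 0"
    and ap: "\<forall>x\<in>A. \<forall>y\<in>B. \<bar>G f as bs R K (x,y) - f (x,y)\<bar> \<le> \<eta>"
  shows "\<bar>2 * K * (\<integral>u. psi f as bs R K u \<partial>Phi T S as bs 1 1 R lam) - (\<integral>z. f z \<partial>lam)\<bar> \<le> \<eta>"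
proof -
  interpret prob_space lam by fact
  have cAB: "compact (UNIV :: ('a \<times> 'b) set)" using compact_Times[OF cA cB] by simp
  have iG: "integrable lam (G f as bs R K)" by (rule cont_integrable[OF cAB G_cont[OF R] sl pl])
  have iF: "integrable lam f" by (rule cont_integrable[OF cAB fc sl pl])
  have e1: "2 * K * (\<integral>u. psi f as bs R K u \<partial>Phi T S as bs 1 1 R lam) = (\<integral>z. G f as bs R K z \<partial>lam)"
    using Phi_formula[OF sl pl R, where f=f and as=as and bs=bs and K=K and T=T and S=S] K by simp
  have aeb: "AE z in lam. \<bar>G f as bs R K z - f z\<bar> \<le> \<eta>"
    using ae
  proof (rule eventually_mono)
    fix z :: "'a \<times> 'b" assume "fst z \<in> A \<and> snd z \<in> B"
    then have "\<bar>G f as bs R K (fst z, snd z) - f (fst z, snd z)\<bar> \<le> \<eta>" using ap by blast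
    then show "\<bar>G f as bs R K z - f z\<bar> \<le> \<eta>" by simp
  qed
  have "(\<integral>z. G f as bs R K z - f z \<partial>lam) \<le> \<eta>"
    using iG iF aeb by (intro integral_le_const) (auto elim: eventually_mono)
  moreover have "(\<integral>z. f z - G f as bs R K z \<partial>lam) \<le> \<eta>"
    using iG iF aeb by (intro integral_le_const) (auto elim: eventually_mono)
  moreover have "(\<integral>z. G f as bs R K z - f z \<partial>lam) = (\<integral>z. G f as bs R K z \<partial>lam) - (\<integral>z. f z \<partial>lam)"
    using iG iF by (rule Bochner_Integration.integral_diff)
  moreover have "(\<integral>z. f z - G f as bs R K z \<partial>lam) = (\<integral>z. f z \<partial>lam) - (\<integral>z. G f as bs R K z \<partial>lam)"
    using iF iG by (rule Bochner_Integration.integral_diff)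
  ultimately show ?thesis using e1 by linarith
qed



theorem theorem26:
  fixes \<mu> :: "'a::{metric_space, second_countable_topology} measure"
    and \<nu> :: "'b::{metric_space, second_countable_topology} measure"
    and T :: "'a \<Rightarrow> 'a" and S :: "'b \<Rightarrow> 'b"
    and as :: "nat \<Rightarrow> 'a" and bs :: "nat \<Rightarrow> 'b"
  assumes X: "cmmps \<mu> T" and Y: "cmmps \<nu> S"
    and Tc: "continuous_on UNIV T" and Sc: "continuous_on UNIV S"
    and as: "dense_seq_in as (supp \<mu>)" and bs: "dense_seq_in bs (supp \<nu>)"
  defines "dX \<equiv> diameter (UNIV :: 'a set)" and "dY \<equiv> diameter (UNIV :: 'b set)"
    and "lam0 \<equiv> \<mu> \<Otimes>\<^sub>M \<nu>"
    and "J \<equiv> joinings \<mu> \<nu> T S"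
  shows
    "(\<forall>lam\<in>J. lam \<noteq> lam0 \<longrightarrow>
        (\<exists>n m R \<psi>. n \<ge> 1 \<and> m \<ge> 1 \<and> R \<ge> 1 \<and> lip1_cube dX dY n m R \<psi> \<and>
           (\<integral>u. \<psi> u \<partial>Phi T S as bs n m R lam) \<noteq> (\<integral>u. \<psi> u \<partial>Phi T S as bs n m R lam0)))
     \<and>
     (\<forall>U. weak_nhd_in J lam0 U \<longrightarrow>
        (\<exists>L ns ms Rs \<psi>s \<epsilon>. (\<epsilon>::real) > 0 \<and>
           (\<forall>l<(L::nat). ns l \<ge> 1 \<and> ms l \<ge> 1 \<and> Rs l \<ge> 1 \<and>
              lip1_cube dX dY (ns l) (ms l) (Rs l) (\<psi>s l)) \<and>
           (\<forall>lam\<in>J. (\<forall>l<L. \<bar>(\<integral>u. \<psi>s l u \<partial>Phi T S as bs (ns l) (ms l) (Rs l) lam)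
                        - (\<integral>u. \<psi>s l u \<partial>Phi T S as bs (ns l) (ms l) (Rs l) lam0)\<bar> < \<epsilon>)
                 \<longrightarrow> lam \<in> U)))"
proof -
  have cA: "compact (UNIV :: 'a set)" and sm: "sets \<mu> = sets borel" and pm: "prob_space \<mu>"
    using X unfolding cmmps_def by auto
  have cB: "compact (UNIV :: 'b set)" and sn: "sets \<nu> = sets borel" and pn: "prob_space \<nu>"
    using Y unfolding cmmps_def by auto
  have g0: "good \<mu> \<nu> lam0" unfolding lam0_def by (rule good_prod[OF sm sn pm pn])
  have gJ: "good \<mu> \<nu> lam" if "lam \<in> J" for lam using that unfolding J_def by (rule good_J)
  have suppA: "compact (supp \<mu>)" using compact_Int_closed[OF cA supp_closed[of \<mu>]] by simp
  have suppB: "compact (supp \<nu>)" using compact_Int_closed[OF cB supp_closed[of \<nu>]] by simp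
  have dA: "\<forall>x\<in>supp \<mu>. \<forall>e>0. \<exists>r. dist x (as r) < e"
  proof (intro ballI allI impI)
    fix x :: 'a and e :: real assume x: "x \<in> supp \<mu>" and e: "e > 0"
    then have "x \<in> closure (range as)" using as unfolding dense_seq_in_def by blast
    then obtain y where "y \<in> range as" "dist y x < e" using e closure_approachable by blast
    then show "\<exists>r. dist x (as r) < e" by (auto simp: dist_commute)
  qed
  have dB: "\<forall>x\<in>supp \<nu>. \<forall>e>0. \<exists>r. dist x (bs r) < e"
  proof (intro ballI allI impI)
    fix x :: 'b and e :: real assume x: "x \<in> supp \<nu>" and e: "e > 0"
    then have "x \<in> closure (range bs)" using bs unfolding dense_seq_in_def by blast
    then obtain y where "y \<in> range bs" "dist y x < e" using e closure_approachable by blast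
    then show "\<exists>r. dist x (bs r) < e" by (auto simp: dist_commute)
  qed
  have main: "\<exists>R K. R \<ge> 1 \<and> K > 0 \<and> (\<forall>lam. good \<mu> \<nu> lam \<longrightarrow>
      \<bar>2 * K * (\<integral>u. psi f as bs R K u \<partial>Phi T S as bs 1 1 R lam) - (\<integral>z. f z \<partial>lam)\<bar> \<le> \<eta>)"
    if fc: "continuous_on UNIV f" and eta: "\<eta> > 0" for f :: "'a \<times> 'b \<Rightarrow> real" and \<eta> :: real
  proof -
    obtain R K where RK: "R \<ge> 1" "K > 0" and ap: "\<forall>x\<in>supp \<mu>. \<forall>y\<in>supp \<nu>. \<bar>G f as bs R K (x,y) - f (x,y)\<bar> \<le> \<eta>"
      using approx[OF cA cB fc suppA dA suppB dB eta] by blast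
    have "\<bar>2 * K * (\<integral>u. psi f as bs R K u \<partial>Phi T S as bs 1 1 R lam) - (\<integral>z. f z \<partial>lam)\<bar> \<le> \<eta>"
      if g: "good \<mu> \<nu> lam" for lam
    proof -
      have sl: "sets lam = sets borel" and pl: "prob_space lam" using g unfolding good_def by auto
      show ?thesis
        by (rule key[OF cA cB sl pl AE_marg[OF sm sn pm pn g] fc RK(1) RK(2) ap])
    qed
    then show ?thesis using RK by blast
  qed
  have lipP: "lip1_cube dX dY 1 1 R (psi f as bs R K)" if "R \<ge> 1" "K > 0" for f R K
    unfolding lip1_cube_def using psi_lip[OF that(2) that(1)] by blast
  have fin: "finite_measure lam" if "good \<mu> \<nu> lam" for lam
    using that unfolding good_def prob_space_def by blast
  have part1: "\<exists>n m R \<psi>. n \<ge> 1 \<and> m \<ge> 1 \<and> R \<ge> 1 \<and> lip1_cube dX dY n m R \<psi> \<and>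
           (\<integral>u. \<psi> u \<partial>Phi T S as bs n m R lam) \<noteq> (\<integral>u. \<psi> u \<partial>Phi T S as bs n m R lam0)"
    if lJ: "lam \<in> J" and ne: "lam \<noteq> lam0" for lam
  proof -
    have gl: "good \<mu> \<nu> lam" using gJ[OF lJ] .
    have "\<exists>f::'a \<times> 'b \<Rightarrow> real. continuous_on UNIV f \<and> (\<integral>z. f z \<partial>lam) \<noteq> (\<integral>z. f z \<partial>lam0)"
    proof (rule ccontr)
      assume "\<not> ?thesis"
      then have "lam = lam0"
        using gl g0 fin[OF gl] fin[OF g0] unfolding good_def
        by (intro meas_eq_cont) auto
      then show False using ne by simp
    qed
    then obtain f :: "'a \<times> 'b \<Rightarrow> real" where fc: "continuous_on UNIV f"
      and df: "(\<integral>z. f z \<partial>lam) \<noteq> (\<integral>z. f z \<partial>lam0)" by blast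
    define \<eta> where "\<eta> = \<bar>(\<integral>z. f z \<partial>lam) - (\<integral>z. f z \<partial>lam0)\<bar> / 4"
    have eta: "\<eta> > 0" using df unfolding \<eta>_def by simp
    obtain R K where RK: "R \<ge> 1" "K > 0" and b: "\<forall>lam. good \<mu> \<nu> lam \<longrightarrow>
      \<bar>2 * K * (\<integral>u. psi f as bs R K u \<partial>Phi T S as bs 1 1 R lam) - (\<integral>z. f z \<partial>lam)\<bar> \<le> \<eta>"
      using main[OF fc eta] by blast
    note b1 = b[rule_format, OF gl]
    note b0 = b[rule_format, OF g0]
    have "(\<integral>u. psi f as bs R K u \<partial>Phi T S as bs 1 1 R lam) \<noteq> (\<integral>u. psi f as bs R K u \<partial>Phi T S as bs 1 1 R lam0)"
    proof
      assume "(\<integral>u. psi f as bs R K u \<partial>Phi T S as bs 1 1 R lam) = (\<integral>u. psi f as bs R K u \<partial>Phi T S as bs 1 1 R lam0)"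
      then have "\<bar>(\<integral>z. f z \<partial>lam) - (\<integral>z. f z \<partial>lam0)\<bar> \<le> 2 * \<eta>" using b1 b0 by simp
      then show False using eta unfolding \<eta>_def by simp
    qed
    then show ?thesis using RK lipP[OF RK] by (intro exI[of _ 1] exI[of _ 1] exI[of _ R]) auto
  qed
  have part2: "\<exists>L ns ms Rs \<psi>s \<epsilon>. (\<epsilon>::real) > 0 \<and>
           (\<forall>l<(L::nat). ns l \<ge> 1 \<and> ms l \<ge> 1 \<and> Rs l \<ge> 1 \<and>
              lip1_cube dX dY (ns l) (ms l) (Rs l) (\<psi>s l)) \<and>
           (\<forall>lam\<in>J. (\<forall>l<L. \<bar>(\<integral>u. \<psi>s l u \<partial>Phi T S as bs (ns l) (ms l) (Rs l) lam)
                        - (\<integral>u. \<psi>s l u \<partial>Phi T S as bs (ns l) (ms l) (Rs l) lam0)\<bar> < \<epsilon>)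
                 \<longrightarrow> lam \<in> U)"
    if U: "weak_nhd_in J lam0 U" for U
  proof -
    obtain F \<delta> where F: "finite F" "\<forall>f\<in>F. continuous_on UNIV (f :: 'a \<times> 'b \<Rightarrow> real)" and d: "\<delta> > 0"
      and sub: "{lam \<in> J. \<forall>f\<in>F. \<bar>(\<integral>x. f x \<partial>lam) - (\<integral>x. f x \<partial>lam0)\<bar> < \<delta>} \<subseteq> U"
      using U unfolding weak_nhd_in_def by blast
    obtain h where h: "bij_betw h {0..<card F} F" using ex_bij_betw_nat_finite[OF F(1)] by blast
    define L where "L = card F"
    have hF: "h l \<in> F" if "l < L" for l using h that unfolding L_def bij_betw_def by auto
    have "\<forall>l. \<exists>p::nat \<times> real. l < L \<longrightarrow> (fst p \<ge> 1 \<and> snd p > 0 \<and> (\<forall>lam. good \<mu> \<nu> lam \<longrightarrow>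
      \<bar>2 * snd p * (\<integral>u. psi (h l) as bs (fst p) (snd p) u \<partial>Phi T S as bs 1 1 (fst p) lam) - (\<integral>z. h l z \<partial>lam)\<bar> \<le> \<delta>/4))"
    proof
      fix l
      show "\<exists>p::nat \<times> real. l < L \<longrightarrow> (fst p \<ge> 1 \<and> snd p > 0 \<and> (\<forall>lam. good \<mu> \<nu> lam \<longrightarrow>
        \<bar>2 * snd p * (\<integral>u. psi (h l) as bs (fst p) (snd p) u \<partial>Phi T S as bs 1 1 (fst p) lam) - (\<integral>z. h l z \<partial>lam)\<bar> \<le> \<delta>/4))"
      proof (cases "l < L")
        case True
        have "continuous_on UNIV (h l)" using F(2) hF[OF True] by blast
        moreover have "\<delta>/4 > 0" using d by simp
        ultimately obtain R K where "R \<ge> 1 \<and> K > 0 \<and> (\<forall>lam. good \<mu> \<nu> lam \<longrightarrow>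
          \<bar>2 * K * (\<integral>u. psi (h l) as bs R K u \<partial>Phi T S as bs 1 1 R lam) - (\<integral>z. h l z \<partial>lam)\<bar> \<le> \<delta>/4)"
          using main by blast
        then show ?thesis by (intro exI[of _ "(R,K)"]) simp
      next
        case False
        then show ?thesis by simp
      qed
    qed
    from choice[OF this] obtain p :: "nat \<Rightarrow> nat \<times> real" where p: "\<forall>l. l < L \<longrightarrow> (fst (p l) \<ge> 1 \<and> snd (p l) > 0 \<and> (\<forall>lam. good \<mu> \<nu> lam \<longrightarrow>
      \<bar>2 * snd (p l) * (\<integral>u. psi (h l) as bs (fst (p l)) (snd (p l)) u \<partial>Phi T S as bs 1 1 (fst (p l)) lam) - (\<integral>z. h l z \<partial>lam)\<bar> \<le> \<delta>/4))"
      by blast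
    define Rs where "Rs l = fst (p l)" for l
    define Ks where "Ks l = snd (p l)" for l
    define \<psi>s where "\<psi>s l = psi (h l) as bs (Rs l) (Ks l)" for l
    define Ssum where "Ssum = 1 + (\<Sum>l<L. Ks l)"
    have Kpos: "Ks l > 0" if "l < L" for l using p that unfolding Ks_def by blast
    have Rge: "Rs l \<ge> 1" if "l < L" for l using p that unfolding Rs_def by blast
    have Sge: "Ks l \<le> Ssum" if "l < L" for l
    proof -
      have "Ks l \<le> (\<Sum>l<L. Ks l)" using that Kpos by (intro member_le_sum) (auto intro: less_imp_le)
      then show ?thesis unfolding Ssum_def by simp
    qed
    have "(\<Sum>l<L. Ks l) \<ge> 0" using Kpos by (intro sum_nonneg) (auto intro: less_imp_le)
    then have Spos: "Ssum > 0" unfolding Ssum_def by simp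
    define \<epsilon> where "\<epsilon> = \<delta> / (6 * Ssum)"
    have epos: "\<epsilon> > 0" unfolding \<epsilon>_def using d Spos by simp
    have Keps: "Ks l * \<epsilon> \<le> \<delta> / 6" if "l < L" for l
    proof -
      have "Ks l * \<epsilon> = (Ks l / Ssum) * (\<delta> / 6)" unfolding \<epsilon>_def by (simp add: field_simps)
      also have "\<dots> \<le> 1 * (\<delta> / 6)" using Sge[OF that] Spos d Kpos[OF that]
        by (intro mult_right_mono) (auto simp: field_simps)
      finally show ?thesis by simp
    qed
    have conc: "lam \<in> U" if lJ: "lam \<in> J" and cl: "\<forall>l<L. \<bar>(\<integral>u. \<psi>s l u \<partial>Phi T S as bs 1 1 (Rs l) lam)
                        - (\<integral>u. \<psi>s l u \<partial>Phi T S as bs 1 1 (Rs l) lam0)\<bar> < \<epsilon>" for lam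
    proof -
      have gl: "good \<mu> \<nu> lam" using gJ[OF lJ] .
      have "\<forall>f\<in>F. \<bar>(\<integral>x. f x \<partial>lam) - (\<integral>x. f x \<partial>lam0)\<bar> < \<delta>"
      proof
        fix f assume "f \<in> F"
        then have "f \<in> h ` {0..<card F}" using h unfolding bij_betw_def by simp
        then obtain l where l0: "l \<in> {0..<card F}" "f = h l" by blast
        then have l: "l < L" "f = h l" unfolding L_def by auto
        let ?a1 = "\<integral>u. \<psi>s l u \<partial>Phi T S as bs 1 1 (Rs l) lam"
        let ?a0 = "\<integral>u. \<psi>s l u \<partial>Phi T S as bs 1 1 (Rs l) lam0"
        have pl: "\<forall>lam. good \<mu> \<nu> lam \<longrightarrow>
          \<bar>2 * Ks l * (\<integral>u. \<psi>s l u \<partial>Phi T S as bs 1 1 (Rs l) lam) - (\<integral>z. h l z \<partial>lam)\<bar> \<le> \<delta>/4"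
          using p l(1) unfolding \<psi>s_def Rs_def Ks_def by blast
        have e1: "\<bar>2 * Ks l * ?a1 - (\<integral>z. f z \<partial>lam)\<bar> \<le> \<delta>/4" using pl gl l(2) by blast
        have e0: "\<bar>2 * Ks l * ?a0 - (\<integral>z. f z \<partial>lam0)\<bar> \<le> \<delta>/4" using pl g0 l(2) by blast
        have "\<bar>?a1 - ?a0\<bar> < \<epsilon>" using cl l(1) by blast
        then have "Ks l * \<bar>?a1 - ?a0\<bar> \<le> Ks l * \<epsilon>" using Kpos[OF l(1)] by (intro mult_left_mono) auto
        then have k1: "Ks l * \<bar>?a1 - ?a0\<bar> \<le> \<delta>/6" using Keps[OF l(1)] by linarith
        have "2 * Ks l * ?a1 - 2 * Ks l * ?a0 = 2 * Ks l * (?a1 - ?a0)" by (simp add: algebra_simps)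
        then have "\<bar>2 * Ks l * ?a1 - 2 * Ks l * ?a0\<bar> = 2 * (Ks l * \<bar>?a1 - ?a0\<bar>)"
          using Kpos[OF l(1)] by (simp add: abs_mult)
        then have "\<bar>2 * Ks l * ?a1 - 2 * Ks l * ?a0\<bar> \<le> \<delta>/3" using k1 by linarith
        then show "\<bar>(\<integral>x. f x \<partial>lam) - (\<integral>x. f x \<partial>lam0)\<bar> < \<delta>" using e1 e0 d
          unfolding abs_le_iff abs_less_iff by linarith
      qed
      then show ?thesis using sub lJ by blast
    qed
    show ?thesis
      apply (rule exI[of _ L], rule exI[of _ "\<lambda>_. 1"], rule exI[of _ "\<lambda>_. 1"], rule exI[of _ Rs],
             rule exI[of _ \<psi>s], rule exI[of _ \<epsilon>])
      using epos Rge Kpos lipP conc unfolding \<psi>s_def by auto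
  qed
  show ?thesis using part1 part2 by blast
qed

end
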